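(* Let $k\ge2$ and let $n$ be a perfect square. Let $\{u,v\}$ be an edge of $G_k$ with $u,v\in H_2$. Then for any two $k$-cliques $K,K'$ of $G_k$ with $u\in K$ and $v\in K'$, we have $K\overset{*}{\leftrightarrow}K'$ in the subgraph of $G_k$ induced by $\mathcal{B}(\{u,v\},k-1)$; that is, there is a sequence of $k$-cliques $K=K_1,K_2,\dots,K_s=K'$, all contained in $\mathcal{B}(\{u,v\},k-1)$, such that $|K_i\cap K_{i+1}|\ge k-1$ for every $i\in[s-1]$.
   Context: $\mathcal{B}(U,T)$ is the set of nodes of $G_k$ at distance at most $T$ from $U$. Let $n$ be a perfect square. $G_2$ is the $(\sqrt n\times\sqrt n)$ simple grid (node set $\{(i,j):i,j\in[\sqrt n]\}$, $(i,j)\sim(i',j')$ iff $|i-i'|+|j-j'|=1$), and $H_2=V(G_2)$. For $k\ge2$, $G_{k+1}$ is obtained from $G_k$ by adding, for each node $u\in V(G_k)$, a new node $u^*$ (the duplicate of $u$) adjacent exactly to $u$ and to all neighbors of $u$ in $G_k$; $H_{k+1}$ is the set of these new nodes, so $V(G_k)=H_2\cup\dots\cup H_k$. *)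

theory Defs
  imports Main
begin

(* Nodes: Grid i j is the grid node (i,j) (in H_2); Dup l u is the duplicate u*
   of the node u of G_(l+2), created when forming G_(l+3). *)
datatype node = Grid nat nat | Dup nat node

(* Level l corresponds to G_(l+2); m = sqrt n. *)
fun gverts :: "nat \<Rightarrow> nat \<Rightarrow> node set" where
  "gverts m 0 = {Grid i j | i j. 1 \<le> i \<and> i \<le> m \<and> 1 \<le> j \<and> j \<le> m}"
| "gverts m (Suc l) = gverts m l \<union> {Dup l u | u. u \<in> gverts m l}"

fun gadj :: "nat \<Rightarrow> nat \<Rightarrow> node \<Rightarrow> node \<Rightarrow> bool" where
  "gadj m 0 x y = (\<exists>i j i' j'. x = Grid i j \<and> y = Grid i' j' \<and>
       x \<in> gverts m 0 \<and> y \<in> gverts m 0 \<and>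
       (if i \<le> i' then i' - i else i - i') + (if j \<le> j' then j' - j else j - j') = 1)"
| "gadj m (Suc l) x y = (gadj m l x y
     \<or> (\<exists>u \<in> gverts m l. x = Dup l u \<and> (y = u \<or> gadj m l u y))
     \<or> (\<exists>u \<in> gverts m l. y = Dup l u \<and> (x = u \<or> gadj m l u x)))"

definition V :: "nat \<Rightarrow> nat \<Rightarrow> node set" where
  "V m k = gverts m (k - 2)"

definition adj :: "nat \<Rightarrow> nat \<Rightarrow> node \<Rightarrow> node \<Rightarrow> bool" where
  "adj m k x y = gadj m (k - 2) x y"

definition H2 :: "nat \<Rightarrow> node set" where
  "H2 m = gverts m 0"

definition edge_rel :: "nat \<Rightarrow> nat \<Rightarrow> (node \<times> node) set" where
  "edge_rel m k = {(x, y). adj m k x y}"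

definition ball :: "nat \<Rightarrow> nat \<Rightarrow> node set \<Rightarrow> nat \<Rightarrow> node set" where
  "ball m k U T = {x \<in> V m k. \<exists>u \<in> U. \<exists>t \<le> T. (u, x) \<in> (edge_rel m k) ^^ t}"

definition is_clique :: "nat \<Rightarrow> nat \<Rightarrow> nat \<Rightarrow> node set \<Rightarrow> bool" where
  "is_clique m k r K \<longleftrightarrow> K \<subseteq> V m k \<and> finite K \<and> card K = r \<and>
     (\<forall>x \<in> K. \<forall>y \<in> K. x \<noteq> y \<longrightarrow> adj m k x y)"

end

theory Submission imports Defs begin

lemma gadj_verts: "gadj m l x y \<Longrightarrow> x \<in> gverts m l \<and> y \<in> gverts m l"
  by (induction l arbitrary: x y) auto

lemma dup_idx: "Dup j z \<in> gverts m l \<Longrightarrow> j < l"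
  by (induction l arbitrary: j z) (auto simp: less_Suc_eq)

lemma dup_notin: "Dup l z \<notin> gverts m l"
  using dup_idx by blast

lemma gadj_mono: "gadj m l x y \<Longrightarrow> gadj m (Suc l) x y"
  by simp

lemma gadj_old: "x \<in> gverts m l \<Longrightarrow> y \<in> gverts m l \<Longrightarrow> gadj m (Suc l) x y \<Longrightarrow> gadj m l x y"
  using dup_notin by auto

lemma gadj_dup1: "gadj m (Suc l) (Dup l y) z \<Longrightarrow> z \<in> gverts m l \<Longrightarrow> z = y \<or> gadj m l y z"
  by (auto dest!: gadj_verts simp: dup_notin)

lemma gadj_dup2: "gadj m (Suc l) z (Dup l y) \<Longrightarrow> z \<in> gverts m l \<Longrightarrow> z = y \<or> gadj m l y z"
  by (auto dest!: gadj_verts simp: dup_notin)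

lemma gadj_dupdup: "\<not> gadj m (Suc l) (Dup l a) (Dup l b)"
  by (auto dest!: gadj_verts simp: dup_notin)

lemma gadj_grid: "x \<in> gverts m 0 \<Longrightarrow> y \<in> gverts m 0 \<Longrightarrow> gadj m l x y \<Longrightarrow> gadj m 0 x y"
proof (induction l)
  case 0 then show ?case by simp
next
  case (Suc l)
  have "gverts m 0 \<subseteq> gverts m l" by (induction l) auto
  then show ?case using Suc gadj_old by blast
qed

lemma gadj0_sym: "gadj m 0 x y \<Longrightarrow> gadj m 0 y x"
proof -
  assume "gadj m 0 x y"
  then obtain i j i' j' where h: "x = Grid i j" "y = Grid i' j'" "x \<in> gverts m 0" "y \<in> gverts m 0"
    "(if i \<le> i' then i' - i else i - i') + (if j \<le> j' then j' - j else j - j') = 1" by auto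
  have "(if i' \<le> i then i - i' else i' - i) + (if j' \<le> j then j - j' else j' - j) = 1"
    using h(5) by (auto split: if_splits)
  then show ?thesis using h by (simp only: gadj.simps) blast
qed

lemma gadj_sym: "gadj m l x y \<Longrightarrow> gadj m l y x"
proof (induction l arbitrary: x y)
  case 0 then show ?case by (rule gadj0_sym)
next
  case (Suc l)
  from Suc.prems show ?case unfolding gadj.simps(2) using Suc.IH by blast
qed

declare gadj.simps[simp del]

fun gpar :: "node \<Rightarrow> bool" where
  "gpar (Grid i j) = even (i + j)" | "gpar (Dup a b) = False"

lemma gadj0_par: "gadj m 0 x y \<Longrightarrow> gpar x \<noteq> gpar y"
proof -
  assume "gadj m 0 x y"
  then obtain i j i' j' where h: "x = Grid i j" "y = Grid i' j'"
    "(if i \<le> i' then i' - i else i - i') + (if j \<le> j' then j' - j else j - j') = 1"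
    by (auto simp: gadj.simps)
  have "(i' = Suc i \<or> i = Suc i') \<and> j = j' \<or> i = i' \<and> (j' = Suc j \<or> j = Suc j')"
    using h(3) by (auto split: if_splits)
  then have "even (i+j) \<noteq> even (i'+j')" by auto
  then show ?thesis using h by simp
qed


lemma gadj_dupI: "u \<in> gverts m l \<Longrightarrow> y = u \<or> gadj m l u y \<Longrightarrow> gadj m (Suc l) (Dup l u) y"
  unfolding gadj.simps(2) by blast

lemma new_dup: "a \<in> gverts m (Suc l) \<Longrightarrow> a \<notin> gverts m l \<Longrightarrow> \<exists>a'. a = Dup l a'"
  by auto

lemma clique_bound:
  "S \<subseteq> gverts m l \<Longrightarrow> finite S \<Longrightarrow> (\<forall>x\<in>S. \<forall>y\<in>S. x \<noteq> y \<longrightarrow> gadj m l x y) \<Longrightarrow> card S \<le> l + 2"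
proof (induction l arbitrary: S)
  case 0
  have "inj_on gpar S"
    unfolding inj_on_def using 0(3) gadj0_par by blast
  then have "card S \<le> card (UNIV :: bool set)"
    by (rule card_inj_on_le) auto
  then show ?case by simp
next
  case (Suc l)
  let ?O = "S \<inter> gverts m l" and ?D = "S - gverts m l"
  have O: "card ?O \<le> l + 2"
    apply (rule Suc.IH)
    using Suc.prems(1,2) apply blast
    using Suc.prems(2) apply blast
    using Suc.prems(3) gadj_old by blast
  have D: "card ?D \<le> 1"
  proof -
    have "\<forall>a\<in>?D. \<forall>b\<in>?D. a = b"
    proof (intro ballI)
      fix a b assume a: "a \<in> ?D" and b: "b \<in> ?D"
      then obtain a' b' where "a = Dup l a'" "b = Dup l b'" using Suc.prems(1) new_dup by (metis DiffE subsetD)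
      then show "a = b" using Suc.prems(3) a b gadj_dupdup by blast
    qed
    then show ?thesis using card_le_Suc0_iff_eq[of ?D] Suc.prems(2) by auto
  qed
  have "S = ?O \<union> ?D" by blast
  then have "card S \<le> card ?O + card ?D" by (metis card_Un_le)
  then show ?case using O D by simp
qed

definition clq :: "nat \<Rightarrow> nat \<Rightarrow> node set \<Rightarrow> bool" where
  "clq m l K \<longleftrightarrow> K \<subseteq> gverts m l \<and> finite K \<and> card K = l + 2 \<and>
     (\<forall>x\<in>K. \<forall>y\<in>K. x \<noteq> y \<longrightarrow> gadj m l x y)"

lemma clq_decomp:
  assumes "clq m (Suc l) K"
  shows "\<exists>K0 y. clq m l K0 \<and> y \<in> K0 \<and> K = insert (Dup l y) K0 \<and> Dup l y \<notin> K0"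
proof -
  let ?O = "K \<inter> gverts m l" and ?D = "K - gverts m l"
  have K: "K \<subseteq> gverts m (Suc l)" "finite K" "card K = l + 3"
    "\<forall>x\<in>K. \<forall>y\<in>K. x \<noteq> y \<longrightarrow> gadj m (Suc l) x y"
    using assms unfolding clq_def by auto
  have Oc: "\<forall>x\<in>?O. \<forall>y\<in>?O. x \<noteq> y \<longrightarrow> gadj m l x y"
    using K(4) gadj_old by blast
  have O: "card ?O \<le> l + 2"
    by (rule clique_bound) (use K Oc in auto)
  have D: "card ?D \<le> 1"
  proof -
    have "\<forall>a\<in>?D. \<forall>b\<in>?D. a = b"
    proof (intro ballI)
      fix a b assume a: "a \<in> ?D" and b: "b \<in> ?D"
      then obtain a' b' where "a = Dup l a'" "b = Dup l b'" using K(1) new_dup by (metis DiffE subsetD)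
      then show "a = b" using K(4) a b gadj_dupdup by blast
    qed
    then show ?thesis using card_le_Suc0_iff_eq[of ?D] K(2) by auto
  qed
  have e: "K = ?O \<union> ?D" by blast
  have "card (?O \<union> ?D) = card ?O + card ?D"
    by (rule card_Un_disjoint) (use K(2) in auto)
  then have "card K = card ?O + card ?D" using e by simp
  then have co: "card ?O = l + 2" and cd: "card ?D = 1" using O D K(3) by auto
  then obtain d where dD: "?D = {d}" by (meson card_1_singletonE)
  then have "d \<in> gverts m (Suc l)" "d \<notin> gverts m l" using K(1) by auto
  then obtain y where d: "d = Dup l y" and yv: "y \<in> gverts m l" by auto
  have dK: "d \<in> K" using dD by auto
  have adjy: "\<forall>z\<in>?O. z = y \<or> gadj m l y z"
  proof
    fix z assume z: "z \<in> ?O"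
    then have "z \<noteq> d" using dD by auto
    then have "gadj m (Suc l) d z" using K(4) dK z by auto
    then show "z = y \<or> gadj m l y z" using gadj_dup1 d z by auto
  qed
  have yO: "y \<in> ?O"
  proof (rule ccontr)
    assume ny: "y \<notin> ?O"
    have pw: "\<forall>x\<in>insert y ?O. \<forall>z\<in>insert y ?O. x \<noteq> z \<longrightarrow> gadj m l x z"
    proof (intro ballI impI)
      fix x z assume x: "x \<in> insert y ?O" and z: "z \<in> insert y ?O" and xz: "x \<noteq> z"
      show "gadj m l x z"
      proof (cases "x = y")
        case True
        then show ?thesis using z xz adjy by auto
      next
        case False
        note xf = False
        show ?thesis
        proof (cases "z = y")
          case True
          have "x \<in> ?O" using x xf by auto
          then have "gadj m l y x" using adjy xf by auto
          then show ?thesis using True gadj_sym[of m l y x] by simp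
        next
          case False
          then show ?thesis using x z xf xz Oc by blast
        qed
      qed
    qed
    have sub: "insert y ?O \<subseteq> gverts m l" using yv by blast
    have "card (insert y ?O) \<le> l + 2"
      using clique_bound[OF sub _ pw] K(2) by simp
    then show False using ny co K(2) by simp
  qed
  have Kd: "K = insert d ?O" using dD by blast
  have "clq m l ?O" unfolding clq_def using co Oc K(2) by auto
  then show ?thesis using yO Kd d dD by blast
qed


lemma clq_lift:
  assumes "clq m l A" "y \<in> A"
  shows "clq m (Suc l) (insert (Dup l y) A)" "Dup l y \<notin> A"
proof -
  have A: "A \<subseteq> gverts m l" "finite A" "card A = l + 2" "\<forall>x\<in>A. \<forall>z\<in>A. x \<noteq> z \<longrightarrow> gadj m l x z"
    using assms(1) unfolding clq_def by auto
  show nd: "Dup l y \<notin> A" using A(1) dup_notin by blast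
  have yv: "y \<in> gverts m l" using A(1) assms(2) by auto
  have a1: "\<forall>z\<in>A. gadj m (Suc l) (Dup l y) z"
  proof
    fix z assume "z \<in> A"
    then have "z = y \<or> gadj m l y z" using A(4) assms(2) by auto
    then show "gadj m (Suc l) (Dup l y) z" using yv by (rule gadj_dupI[rotated])
  qed
  have a2: "\<forall>z\<in>A. gadj m (Suc l) z (Dup l y)"
    using a1 gadj_sym[of m "Suc l" "Dup l y"] by simp
  have s1: "insert (Dup l y) A \<subseteq> gverts m (Suc l)" using A(1) yv by auto
  have s2: "finite (insert (Dup l y) A)" using A(2) by blast
  have s3: "card (insert (Dup l y) A) = Suc l + 2" using A(2,3) nd by simp
  have s4: "\<forall>x\<in>insert (Dup l y) A. \<forall>z\<in>insert (Dup l y) A. x \<noteq> z \<longrightarrow> gadj m (Suc l) x z"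
  proof (intro ballI impI)
    fix x z assume x: "x \<in> insert (Dup l y) A" and z: "z \<in> insert (Dup l y) A" and xz: "x \<noteq> z"
    show "gadj m (Suc l) x z"
    proof (cases "x = Dup l y")
      case True
      then show ?thesis using z xz a1 by blast
    next
      case False
      note xf = False
      show ?thesis
      proof (cases "z = Dup l y")
        case True
        then show ?thesis using x xf a2 by blast
      next
        case False
        then have "gadj m l x z" using x z xf xz A(4) by auto
        then show ?thesis by (rule gadj_mono)
      qed
    qed
  qed
  show "clq m (Suc l) (insert (Dup l y) A)"
    unfolding clq_def using s1 s2 s3 s4 by blast
qed

definition Rl :: "nat \<Rightarrow> nat \<Rightarrow> node \<Rightarrow> (node set \<times> node set) set" where
  "Rl m l u = {(A, B). clq m l A \<and> clq m l B \<and> u \<in> A \<and> u \<in> B \<and> l + 1 \<le> card (A \<inter> B)}"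

lemma lift_swap:
  assumes "clq m l A" "y \<in> A" "z \<in> A" "u \<in> A"
  shows "(insert (Dup l y) A, insert (Dup l z) A) \<in> Rl m (Suc l) u"
proof -
  have "A \<subseteq> insert (Dup l y) A \<inter> insert (Dup l z) A" by auto
  moreover have "finite (insert (Dup l y) A \<inter> insert (Dup l z) A)" using assms(1) unfolding clq_def by auto
  ultimately have "card A \<le> card (insert (Dup l y) A \<inter> insert (Dup l z) A)" by (rule card_mono[rotated])
  moreover have "card A = l + 2" using assms(1) unfolding clq_def by blast
  ultimately have c: "Suc l + 1 \<le> card (insert (Dup l y) A \<inter> insert (Dup l z) A)" by simp
  have "clq m (Suc l) (insert (Dup l y) A)" "clq m (Suc l) (insert (Dup l z) A)"
    using clq_lift[OF assms(1,2)] clq_lift[OF assms(1,3)] by blast+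
  then show ?thesis unfolding Rl_def using c assms(4) by blast
qed

lemma lift_step:
  assumes "(A, B) \<in> Rl m l u"
  obtains x where "x \<in> A" "x \<in> B" "(insert (Dup l x) A, insert (Dup l x) B) \<in> Rl m (Suc l) u"
proof -
  have h: "clq m l A" "clq m l B" "u \<in> A" "u \<in> B" "l + 1 \<le> card (A \<inter> B)"
    using assms unfolding Rl_def by auto
  then have "A \<inter> B \<noteq> {}" by auto
  then obtain x where x: "x \<in> A" "x \<in> B" by auto
  have nd: "Dup l x \<notin> A \<inter> B" using clq_lift(2)[OF h(1) x(1)] by auto
  have fin: "finite (A \<inter> B)" using h(1) unfolding clq_def by auto
  have "insert (Dup l x) (A \<inter> B) = insert (Dup l x) A \<inter> insert (Dup l x) B" by auto
  moreover have "card (insert (Dup l x) (A \<inter> B)) = Suc (card (A \<inter> B))" using nd fin by simp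
  ultimately have "Suc l + 1 \<le> card (insert (Dup l x) A \<inter> insert (Dup l x) B)" using h(5) by simp
  then have "(insert (Dup l x) A, insert (Dup l x) B) \<in> Rl m (Suc l) u"
    unfolding Rl_def using clq_lift(1)[OF h(1) x(1)] clq_lift(1)[OF h(2) x(2)] h(3,4) by auto
  then show ?thesis using that x by blast
qed

lemma lift_path:
  assumes "(A, B) \<in> (Rl m l u)\<^sup>*" "clq m l A" "u \<in> A"
  shows "\<forall>y\<in>A. \<forall>z\<in>B. (insert (Dup l y) A, insert (Dup l z) B) \<in> (Rl m (Suc l) u)\<^sup>*"
  using assms(1)
proof (induction rule: rtrancl_induct)
  case base
  then show ?case using lift_swap[OF assms(2) _ _ assms(3)] by blast
next
  case (step B C)
  show ?case
  proof (intro ballI)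
    fix y z assume y: "y \<in> A" and z: "z \<in> C"
    obtain x where x: "x \<in> B" "x \<in> C" "(insert (Dup l x) B, insert (Dup l x) C) \<in> Rl m (Suc l) u"
      using lift_step[OF step(2)] by blast
    have cC: "clq m l C" "u \<in> C" using step(2) unfolding Rl_def by auto
    have "(insert (Dup l y) A, insert (Dup l x) B) \<in> (Rl m (Suc l) u)\<^sup>*" using step.IH y x(1) by blast
    also have "(insert (Dup l x) B, insert (Dup l x) C) \<in> (Rl m (Suc l) u)\<^sup>*" using x(3) by blast
    also have "(insert (Dup l x) C, insert (Dup l z) C) \<in> (Rl m (Suc l) u)\<^sup>*"
      using lift_swap[OF cC(1) x(2) z cC(2)] by blast
    finally show "(insert (Dup l y) A, insert (Dup l z) C) \<in> (Rl m (Suc l) u)\<^sup>*" .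
  qed
qed

fun chainU :: "node \<Rightarrow> nat \<Rightarrow> node" where
  "chainU u 0 = u" | "chainU u (Suc l) = Dup l (chainU u l)"

fun Cq :: "nat \<Rightarrow> node \<Rightarrow> node \<Rightarrow> node set" where
  "Cq 0 u w = {u, w}" | "Cq (Suc l) u w = insert (Dup l (chainU u l)) (Cq l u w)"

lemma Cq_props:
  assumes "gadj m 0 u w"
  shows "clq m l (Cq l u w) \<and> chainU u l \<in> Cq l u w \<and> u \<in> Cq l u w \<and> w \<in> Cq l u w"
proof (induction l)
  case 0
  have "u \<noteq> w" using gadj0_par[OF assms] by auto
  moreover have "u \<in> gverts m 0" "w \<in> gverts m 0" using gadj_verts[OF assms] by auto
  ultimately show ?case using assms gadj0_sym[OF assms] unfolding clq_def by (auto simp del: gadj.simps)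
next
  case (Suc l)
  then show ?case using clq_lift(1)[of m l "Cq l u w" "chainU u l"] by auto
qed

lemma lemmaA:
  assumes "gadj m 0 u w"
  shows "clq m l K \<Longrightarrow> u \<in> K \<Longrightarrow> (K, Cq l u w) \<in> (Rl m l u)\<^sup>*"
proof (induction l arbitrary: K)
  case 0
  have c: "clq m 0 (Cq 0 u w)" "u \<in> Cq 0 u w" using Cq_props[OF assms, of 0] by blast+
  have "finite (K \<inter> Cq 0 u w)" using 0 unfolding clq_def by auto
  moreover have "u \<in> K \<inter> Cq 0 u w" using 0 c by auto
  ultimately have "1 \<le> card (K \<inter> Cq 0 u w)" by (metis One_nat_def Suc_leI card_gt_0_iff empty_iff)
  then have "(K, Cq 0 u w) \<in> Rl m 0 u" unfolding Rl_def using 0 c by auto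
  then show ?case by blast
next
  case (Suc l)
  obtain K0 y where d: "clq m l K0" "y \<in> K0" "K = insert (Dup l y) K0" "Dup l y \<notin> K0"
    using clq_decomp[OF Suc.prems(1)] by blast
  have uK0: "u \<in> K0"
  proof -
    have "u \<in> gverts m 0" using gadj_verts[OF assms] by auto
    then have "u \<noteq> Dup l y" by auto
    then show ?thesis using Suc.prems(2) d(3) by auto
  qed
  have "(K0, Cq l u w) \<in> (Rl m l u)\<^sup>*" using Suc.IH[OF d(1) uK0] .
  then have "\<forall>y\<in>K0. \<forall>z\<in>Cq l u w. (insert (Dup l y) K0, insert (Dup l z) (Cq l u w)) \<in> (Rl m (Suc l) u)\<^sup>*"
    by (rule lift_path[OF _ d(1) uK0])
  then show ?case using d Cq_props[OF assms, of l] by auto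
qed


lemma rtrancl_list:
  assumes "(a, b) \<in> S\<^sup>*" "P b" "\<And>x y. (x, y) \<in> S \<Longrightarrow> P x \<and> P y"
  shows "\<exists>Ks. Ks \<noteq> [] \<and> hd Ks = a \<and> last Ks = b \<and> (\<forall>C\<in>set Ks. P C) \<and>
           (\<forall>i. Suc i < length Ks \<longrightarrow> (Ks ! i, Ks ! Suc i) \<in> S)"
  using assms(1)
proof (induction rule: converse_rtrancl_induct)
  case base
  then show ?case using assms(2) by (intro exI[of _ "[b]"]) auto
next
  case (step a a')
  then obtain Ks where Ks: "Ks \<noteq> []" "hd Ks = a'" "last Ks = b" "\<forall>C\<in>set Ks. P C"
    "\<forall>i. Suc i < length Ks \<longrightarrow> (Ks ! i, Ks ! Suc i) \<in> S" by blast
  have "\<forall>i. Suc i < length (a # Ks) \<longrightarrow> ((a # Ks) ! i, (a # Ks) ! Suc i) \<in> S"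
  proof (intro allI impI)
    fix i assume "Suc i < length (a # Ks)"
    then show "((a # Ks) ! i, (a # Ks) ! Suc i) \<in> S"
      using Ks step(1) by (cases i) (auto simp: hd_conv_nth)
  qed
  then show ?case using Ks step(1) assms(3) by (intro exI[of _ "a # Ks"]) auto
qed

theorem mainTheorem18:
  fixes n m k :: nat and u v :: node and K K' :: "node set"
  assumes "k \<ge> 2" and "n = m ^ 2"
    and "u \<in> H2 m" and "v \<in> H2 m" and "adj m k u v"
    and "is_clique m k k K" and "is_clique m k k K'"
    and "u \<in> K" and "v \<in> K'"
  shows "\<exists>Ks :: node set list. Ks \<noteq> [] \<and> hd Ks = K \<and> last Ks = K' \<and>
           (\<forall>C \<in> set Ks. is_clique m k k C \<and> C \<subseteq> ball m k {u, v} (k - 1)) \<and>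
           (\<forall>i. Suc i < length Ks \<longrightarrow> card (Ks ! i \<inter> Ks ! Suc i) \<ge> k - 1)"
proof -
  define l where "l = k - 2"
  have kl: "k = l + 2" using assms(1) l_def by simp
  have cl: "\<And>C. is_clique m k k C \<longleftrightarrow> clq m l C"
    unfolding is_clique_def clq_def V_def adj_def l_def using kl l_def by auto
  define good where "good C \<longleftrightarrow> is_clique m k k C \<and> C \<subseteq> ball m k {u, v} (k - 1)" for C
  define R where "R = {(A, B). good A \<and> good B \<and> k - 1 \<le> card (A \<inter> B)}"
  have goodI: "good C" if "clq m l C" "x \<in> C" "x \<in> {u, v}" for C x
  proof -
    have "C \<subseteq> ball m k {u, v} (k - 1)"
    proof
      fix y assume y: "y \<in> C"
      have yV: "y \<in> V m k" using that(1) y unfolding clq_def V_def l_def by auto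
      show "y \<in> ball m k {u, v} (k - 1)"
      proof (cases "y = x")
        case True
        then show ?thesis unfolding ball_def using yV that(3) by (intro CollectI conjI; force)
      next
        case False
        then have "adj m k x y" using that y unfolding clq_def adj_def l_def by auto
        then have "(x, y) \<in> edge_rel m k ^^ 1" unfolding edge_rel_def by simp
        then show ?thesis unfolding ball_def using yV that(3) assms(1)
          by (intro CollectI conjI) (auto intro!: bexI[of _ x] exI[of _ 1])
      qed
    qed
    then show ?thesis unfolding good_def using cl that(1) by simp
  qed
  have sub: "Rl m l x \<subseteq> R" if "x \<in> {u, v}" for x
    unfolding Rl_def R_def using goodI that kl by auto
  have subs: "(Rl m l x)\<^sup>* \<subseteq> R\<^sup>*" if "x \<in> {u, v}" for x
    using sub[OF that] by (rule rtrancl_mono)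
  have Rsym: "(a, b) \<in> R\<^sup>* \<Longrightarrow> (b, a) \<in> R\<^sup>*" for a b
  proof -
    have "R\<inverse> = R" unfolding R_def by (auto simp: Int_commute)
    moreover assume "(a, b) \<in> R\<^sup>*"
    ultimately show ?thesis using rtrancl_converseI by (metis)
  qed
  have uv: "gadj m 0 u v"
    using gadj_grid assms(3,4,5) unfolding H2_def adj_def by blast
  have vu: "gadj m 0 v u" using gadj0_sym[OF uv] .
  have cK: "clq m l K" "clq m l K'" using assms(6,7) cl by auto
  have p1: "(K, Cq l u v) \<in> R\<^sup>*" using lemmaA[OF uv cK(1) assms(8)] subs by blast
  have cuv: "clq m l (Cq l u v)" "v \<in> Cq l u v" using Cq_props[OF uv, of l] by auto
  have p2: "(Cq l u v, Cq l v u) \<in> R\<^sup>*" using lemmaA[OF vu cuv] subs by blast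
  have p3: "(K', Cq l v u) \<in> R\<^sup>*" using lemmaA[OF vu cK(2) assms(9)] subs by blast
  have "(K, K') \<in> R\<^sup>*" using p1 p2 Rsym[OF p3] by (meson rtrancl_trans)
  moreover have "good K'" using goodI[OF cK(2) assms(9)] by simp
  ultimately obtain Ks where Ks: "Ks \<noteq> []" "hd Ks = K" "last Ks = K'" "\<forall>C\<in>set Ks. good C"
    "\<forall>i. Suc i < length Ks \<longrightarrow> (Ks ! i, Ks ! Suc i) \<in> R"
    using rtrancl_list[of K K' R good] unfolding R_def by blast
  show ?thesis
    apply (rule exI[of _ Ks])
    using Ks unfolding good_def R_def by auto
qed

end
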